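(* Let $r,s,t$ be nonzero reals and $\lambda=(\lambda_k)_{k\ge0}$ a strictly increasing sequence of positive reals with $\lambda_k\to\infty$. Let $D=(d_{nk})$ be the inverse of the lower triangular matrix $B(r,s,t)$. For $x\in\omega$ put $\widehat W_k(x)=\frac{1}{\lambda_k}\sum_{j=0}^k(\lambda_j-\lambda_{j-1})(rx_j+sx_{j-1}+tx_{j-2})$ and $\alpha_k(\lambda)=\widehat W_k(x)$. For each fixed $k\in\mathbb{N}$ define $b^{(k)}(\lambda)=(b^{(k)}_n(\lambda))_{n\in\mathbb{N}}$ by $$b_n^{(k)}(\lambda)=\begin{cases}\dfrac{d_{nk}\lambda_k}{\lambda_k-\lambda_{k-1}}-\dfrac{d_{n,k+1}\lambda_k}{\lambda_{k+1}-\lambda_k},& n>k,\\[2mm] \dfrac{1}{r}\dfrac{\lambda_k}{\lambda_k-\lambda_{k-1}},& n=k,\\[2mm] 0,& n<k.\end{cases}$$ Then: (i) $(b^{(k)}(\lambda))_{k\in\mathbb{N}}$ is a Schauder basis of $c_0^\lambda(\widehat B)$, and every $x\in c_0^\lambda(\widehat B)$ has the unique representation $x=\sum_k\alpha_k(\lambda)b^{(k)}(\lambda)$; (ii) for $1\le p<\infty$, $(b^{(k)}(\lambda))_{k\in\mathbb{N}}$ is a Schauder basis of $\ell_p^\lambda(\widehat B)$, and every $x\in\ell_p^\lambda(\widehat B)$ has the unique representation $x=\sum_k\alpha_k(\lambda)b^{(k)}(\lambda)$; (iii) with $b=(b_k)$, $b_k=\sum_{j=0}^k d_{kj}$, the sequence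 $\{b,b^{(0)}(\lambda),b^{(1)}(\lambda),\dots\}$ is a Schauder basis of $c^\lambda(\widehat B)$, and every $x\in c^\lambda(\widehat B)$ has the unique representation $x=lb+\sum_k[\alpha_k(\lambda)-l]b^{(k)}(\lambda)$, where $l=\lim_{k\to\infty}\widehat W_k(x)$.
   Context: $\omega$: all complex sequences indexed by $\mathbb{N}=\{0,1,\dots\}$. Convention: terms with negative subscript are $0$. $B(r,s,t)=(b_{nk})$ is the lower triangular matrix with $b_{nn}=r$, $b_{n,n-1}=s$, $b_{n,n-2}=t$ and all other entries $0$; its inverse $D=(d_{nk})$ is lower triangular, explicitly $d_{nk}=\frac1r\sum_{v=0}^{n-k}\rho_1^{\,n-k-v}\rho_2^{\,v}$ for $0\le k\le n$ and $d_{nk}=0$ for $k>n$, where $\rho_{1,2}=\frac{-s\pm\sqrt{s^2-4tr}}{2r}$. For $\mu\in\{c_0,c,\ell_p\}$, $\mu^\lambda(\widehat B)=\{x\in\omega:(\widehat W_n(x))_n\in\mu\}$, normed by $\|x\|=\sup_n|\widehat W_n(x)|$ for $\mu\in\{c_0,c\}$ and $\|x\|=(\sum_n|\widehat W_n(x)|^p)^{1/p}$ for $\mu=\ell_p$. A sequence $(e_k)$ in a normed space $X$ is a Schauder basis if every $x\in X$ has a unique expansion $x=\sum_k\beta_ke_k$ convergent in norm. *)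

theory Defs
  imports "HOL-Analysis.Analysis"
begin

text \<open>Sequences in omega are functions nat => complex. Terms with negative
subscript are 0: sequence entry x_{j-i} is written shiftseq x i j.\<close>

definition shiftseq :: "(nat \<Rightarrow> 'a::zero) \<Rightarrow> nat \<Rightarrow> nat \<Rightarrow> 'a" where
  "shiftseq x i j = (if j < i then 0 else x (j - i))"

definition lprev :: "(nat \<Rightarrow> real) \<Rightarrow> nat \<Rightarrow> real" where
  "lprev lam k = (if k = 0 then 0 else lam (k - 1))"

definition Bmat :: "real \<Rightarrow> real \<Rightarrow> real \<Rightarrow> nat \<Rightarrow> nat \<Rightarrow> real" where
  "Bmat r s t n k = (if k = n then r else if k + 1 = n then s else if k + 2 = n then t else 0)"

definition lower_triangular :: "(nat \<Rightarrow> nat \<Rightarrow> real) \<Rightarrow> bool" where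
  "lower_triangular M \<longleftrightarrow> (\<forall>n k. n < k \<longrightarrow> M n k = 0)"

text \<open>The inverse D = (d_nk) of B(r,s,t): the (unique) lower triangular matrix
with B D = I (products of lower triangular matrices are finite sums).\<close>
definition Dinv :: "real \<Rightarrow> real \<Rightarrow> real \<Rightarrow> nat \<Rightarrow> nat \<Rightarrow> real" where
  "Dinv r s t = (THE D. lower_triangular D \<and>
     (\<forall>n k. (\<Sum>j\<le>n. Bmat r s t n j * D j k) = (if n = k then 1 else 0)))"

definition What :: "(nat \<Rightarrow> real) \<Rightarrow> real \<Rightarrow> real \<Rightarrow> real \<Rightarrow> (nat \<Rightarrow> complex) \<Rightarrow> nat \<Rightarrow> complex" where
  "What lam r s t x k = of_real (1 / lam k) *
     (\<Sum>j\<le>k. of_real (lam j - lprev lam j) *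
        (of_real r * x j + of_real s * shiftseq x 1 j + of_real t * shiftseq x 2 j))"

definition c0_lam :: "(nat \<Rightarrow> real) \<Rightarrow> real \<Rightarrow> real \<Rightarrow> real \<Rightarrow> (nat \<Rightarrow> complex) set" where
  "c0_lam lam r s t = {x. (\<lambda>n. What lam r s t x n) \<longlonglongrightarrow> 0}"

definition c_lam :: "(nat \<Rightarrow> real) \<Rightarrow> real \<Rightarrow> real \<Rightarrow> real \<Rightarrow> (nat \<Rightarrow> complex) set" where
  "c_lam lam r s t = {x. convergent (\<lambda>n. What lam r s t x n)}"

definition lp_lam :: "real \<Rightarrow> (nat \<Rightarrow> real) \<Rightarrow> real \<Rightarrow> real \<Rightarrow> real \<Rightarrow> (nat \<Rightarrow> complex) set" where
  "lp_lam p lam r s t = {x. summable (\<lambda>n. norm (What lam r s t x n) powr p)}"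

definition sup_norm_lam :: "(nat \<Rightarrow> real) \<Rightarrow> real \<Rightarrow> real \<Rightarrow> real \<Rightarrow> (nat \<Rightarrow> complex) \<Rightarrow> real" where
  "sup_norm_lam lam r s t x = (SUP n. norm (What lam r s t x n))"

definition p_norm_lam :: "real \<Rightarrow> (nat \<Rightarrow> real) \<Rightarrow> real \<Rightarrow> real \<Rightarrow> real \<Rightarrow> (nat \<Rightarrow> complex) \<Rightarrow> real" where
  "p_norm_lam p lam r s t x = (\<Sum>n. norm (What lam r s t x n) powr p) powr (1 / p)"

definition schauder_basis ::
  "(nat \<Rightarrow> complex) set \<Rightarrow> ((nat \<Rightarrow> complex) \<Rightarrow> real) \<Rightarrow> (nat \<Rightarrow> nat \<Rightarrow> complex) \<Rightarrow> bool" where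
  "schauder_basis X N e \<longleftrightarrow> (\<forall>k. e k \<in> X) \<and>
     (\<forall>x\<in>X. \<exists>!\<beta>::nat \<Rightarrow> complex.
        (\<lambda>m. N (\<lambda>n. x n - (\<Sum>k<m. \<beta> k * e k n))) \<longlonglongrightarrow> 0)"

definition bk :: "(nat \<Rightarrow> real) \<Rightarrow> real \<Rightarrow> real \<Rightarrow> real \<Rightarrow> nat \<Rightarrow> nat \<Rightarrow> complex" where
  "bk lam r s t k n =
     (if k < n then of_real (Dinv r s t n k * lam k / (lam k - lprev lam k)
                             - Dinv r s t n (k + 1) * lam k / (lam (k + 1) - lam k))
      else if n = k then of_real ((1 / r) * (lam k / (lam k - lprev lam k)))
      else 0)"

definition bseq :: "real \<Rightarrow> real \<Rightarrow> real \<Rightarrow> nat \<Rightarrow> complex" where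
  "bseq r s t k = of_real (\<Sum>j\<le>k. Dinv r s t k j)"

end

theory Submission
  imports Defs
begin


lemma Bsum:
  "(\<Sum>i\<le>j. Bmat r s t j i * g i) = r * g j + s * shiftseq g 1 j + t * shiftseq g 2 j"
proof (cases j)
  case 0 then show ?thesis by (simp add: Bmat_def shiftseq_def)
next
  case (Suc m)
  show ?thesis
  proof (cases m)
    case 0 then show ?thesis using Suc by (simp add: Bmat_def shiftseq_def)
  next
    case (Suc q)
    have z: "(\<Sum>i<q. Bmat r s t j i * g i) = 0"
      by (rule sum.neutral) (auto simp: Bmat_def \<open>j = Suc m\<close> Suc)
    have "(\<Sum>i\<le>j. Bmat r s t j i * g i) = (\<Sum>i<q. Bmat r s t j i * g i) + Bmat r s t j q * g q
       + Bmat r s t j (Suc q) * g (Suc q) + Bmat r s t j (Suc (Suc q)) * g (Suc (Suc q))"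
      using \<open>j = Suc m\<close> Suc by (simp add: lessThan_Suc_atMost[symmetric])
    then show ?thesis using z \<open>j = Suc m\<close> Suc by (simp add: Bmat_def shiftseq_def)
  qed
qed

fun dseq :: "real \<Rightarrow> real \<Rightarrow> real \<Rightarrow> nat \<Rightarrow> real" where
  "dseq r s t 0 = 1 / r"
| "dseq r s t (Suc 0) = - s / r * (1 / r)"
| "dseq r s t (Suc (Suc n)) = - (s * dseq r s t (Suc n) + t * dseq r s t n) / r"

definition D0 :: "real \<Rightarrow> real \<Rightarrow> real \<Rightarrow> nat \<Rightarrow> nat \<Rightarrow> real" where
  "D0 r s t n k = (if k \<le> n then dseq r s t (n - k) else 0)"

lemma D0_prop:
  assumes r: "r \<noteq> 0"
  shows "(\<Sum>j\<le>n. Bmat r s t n j * D0 r s t j k) = (if n = k then 1 else 0)"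
  unfolding Bsum
proof -
  consider "n < k" | "n = k" | "n = Suc k" | m where "n = Suc (Suc (k + m))"
  proof -
    have "n < k \<or> n = k \<or> n = Suc k \<or> n = Suc (Suc (k + (n - k - 2)))" by arith
    then show thesis using that by blast
  qed
  then show "r * D0 r s t n k + s * shiftseq (\<lambda>j. D0 r s t j k) 1 n + t * shiftseq (\<lambda>j. D0 r s t j k) 2 n = (if n = k then 1 else 0)"
  proof cases
    case 1 then show ?thesis by (auto simp: D0_def shiftseq_def)
  next
    case 2 then show ?thesis using r by (auto simp: D0_def shiftseq_def)
  next
    case 3 then show ?thesis using r by (auto simp: D0_def shiftseq_def)
  next
    case 4
    have b1: "D0 r s t n k = dseq r s t (Suc (Suc m))" using 4 unfolding D0_def by simp
    have b2: "shiftseq (\<lambda>j. D0 r s t j k) 1 n = dseq r s t (Suc m)"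
      using 4 unfolding D0_def shiftseq_def by simp
    have b3: "shiftseq (\<lambda>j. D0 r s t j k) 2 n = dseq r s t m"
      using 4 unfolding D0_def shiftseq_def by simp
    have c: "r * dseq r s t (Suc (Suc m)) + s * dseq r s t (Suc m) + t * dseq r s t m = 0"
      using r by (simp only: dseq.simps(3)) simp
    show ?thesis unfolding b1 b2 b3 c using 4 by simp
  qed
qed

lemma Dinv_ex_unique:
  assumes r: "r \<noteq> 0"
  shows "\<exists>!D. lower_triangular D \<and>
     (\<forall>n k. (\<Sum>j\<le>n. Bmat r s t n j * D j k) = (if n = k then 1 else 0))"
proof
  show "lower_triangular (D0 r s t) \<and>
     (\<forall>n k. (\<Sum>j\<le>n. Bmat r s t n j * D0 r s t j k) = (if n = k then 1 else 0))"
    using D0_prop[OF r] by (auto simp: lower_triangular_def D0_def)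
next
  fix D
  assume D: "lower_triangular D \<and>
     (\<forall>n k. (\<Sum>j\<le>n. Bmat r s t n j * D j k) = (if n = k then 1 else 0))"
  have "\<forall>k. D n k = D0 r s t n k" for n
  proof (induction n rule: less_induct)
    case (less n)
    show ?case
    proof
      fix k
      have e1: "(\<Sum>j\<le>n. Bmat r s t n j * D j k) = (if n = k then 1 else 0)" using D by blast
      have e2: "(\<Sum>j\<le>n. Bmat r s t n j * D0 r s t j k) = (if n = k then 1 else 0)"
        using D0_prop[OF r] .
      have sh1: "shiftseq (\<lambda>j. D j k) 1 n = shiftseq (\<lambda>j. D0 r s t j k) 1 n"
        using less by (simp add: shiftseq_def)
      have sh2: "shiftseq (\<lambda>j. D j k) 2 n = shiftseq (\<lambda>j. D0 r s t j k) 2 n"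
        using less by (simp add: shiftseq_def)
      have "r * D n k = r * D0 r s t n k" using e1 e2 unfolding Bsum sh1 sh2 by linarith
      then show "D n k = D0 r s t n k" using r by simp
    qed
  qed
  then show "D = D0 r s t"
    by (auto simp: fun_eq_iff)
qed

lemma Dinv_prop:
  assumes r: "r \<noteq> 0"
  shows "lower_triangular (Dinv r s t)"
    "\<And>n k. (\<Sum>j\<le>n. Bmat r s t n j * Dinv r s t j k) = (if n = k then 1 else 0)"
  using theI'[OF Dinv_ex_unique[OF r, of s t]] unfolding Dinv_def[symmetric] by auto

lemma Dinv_zero: "r \<noteq> 0 \<Longrightarrow> n < k \<Longrightarrow> Dinv r s t n k = 0"
  using Dinv_prop(1) by (auto simp: lower_triangular_def)

lemma Dinv_diag: assumes r: "r \<noteq> 0" shows "Dinv r s t k k = 1 / r"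
proof -
  have "(\<Sum>j\<le>k. Bmat r s t k j * Dinv r s t j k) = 1" using Dinv_prop(2)[OF r, where n=k and k=k] by simp
  then have "r * Dinv r s t k k = 1" unfolding Bsum
    by (cases "k = 0"; cases "k < 2"; simp add: shiftseq_def Dinv_zero[OF r])
  then show ?thesis using r by (simp add: field_simps)
qed



lemma shiftseq_lin: fixes x z :: "nat \<Rightarrow> complex" shows "shiftseq (\<lambda>n. x n + c * z n) i j = shiftseq x i j + c * shiftseq z i j"
  by (simp add: shiftseq_def)

lemma What_lin: "What lam r s t (\<lambda>n. x n + c * z n) k = What lam r s t x k + c * What lam r s t z k"
proof -
  define T where "T y j = complex_of_real (lam j - lprev lam j) *
        (complex_of_real r * y j + complex_of_real s * shiftseq y 1 j + complex_of_real t * shiftseq y 2 j)" for y j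
  have "T (\<lambda>n. x n + c * z n) j = T x j + c * T z j" for j
    unfolding T_def shiftseq_lin by (simp add: algebra_simps)
  then have eq: "(\<Sum>j\<le>k. T (\<lambda>n. x n + c * z n) j) = (\<Sum>j\<le>k. T x j) + c * (\<Sum>j\<le>k. T z j)"
    by (simp add: sum.distrib sum_distrib_left)
  have W: "What lam r s t y k = complex_of_real (1 / lam k) * (\<Sum>j\<le>k. T y j)" for y
    unfolding What_def T_def by simp
  show ?thesis unfolding W eq by (simp add: algebra_simps)
qed

lemma What_sum: "What lam r s t (\<lambda>n. x n - (\<Sum>i<(m::nat). c i * e i n)) k
   = What lam r s t x k - (\<Sum>i<m. c i * What lam r s t (e i) k)"
proof (induction m)
  case 0 then show ?case by simp
next
  case (Suc m)
  have "What lam r s t (\<lambda>n. x n - (\<Sum>i<Suc m. c i * e i n)) k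
    = What lam r s t (\<lambda>n. (x n - (\<Sum>i<m. c i * e i n)) + (- c m) * e m n) k"
    by (simp add: algebra_simps)
  also have "\<dots> = What lam r s t (\<lambda>n. x n - (\<Sum>i<m. c i * e i n)) k + (- c m) * What lam r s t (e m) k"
    by (rule What_lin)
  finally show ?case using Suc by simp
qed

lemma What_real: "What lam r s t (\<lambda>n. complex_of_real (g n)) k = complex_of_real
   ((1 / lam k) * (\<Sum>j\<le>k. (lam j - lprev lam j) * (\<Sum>i\<le>j. Bmat r s t j i * g i)))"
  unfolding Bsum What_def by (simp add: shiftseq_def if_distrib[of complex_of_real] cong: if_cong)

lemma telescope: "(\<Sum>j\<le>(n::nat). lam j - lprev lam j) = (lam n :: real)"
  by (induction n) (auto simp: lprev_def)

lemma lam_gaps: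
  assumes "strict_mono lam" "\<And>k. lam k > 0"
  shows "lam k - lprev lam k > 0" "lam (Suc k) - lam k > 0"
proof -
  show "lam (Suc k) - lam k > 0" using assms(1) by (simp add: strict_mono_def)
  show "lam k - lprev lam k > 0"
  proof (cases k)
    case 0 then show ?thesis using assms(2) by (simp add: lprev_def)
  next
    case (Suc q) then show ?thesis using assms(1) by (simp add: lprev_def strict_mono_def)
  qed
qed

lemma bk_real:
  assumes r: "r \<noteq> 0"
  shows "bk lam r s t k n = complex_of_real (Dinv r s t n k * (lam k / (lam k - lprev lam k))
                      - Dinv r s t n (Suc k) * (lam k / (lam (Suc k) - lam k)))"
proof -
  consider "k < n" | "n = k" | "n < k" by linarith
  then show ?thesis
  proof cases
    case 1 then show ?thesis by (simp add: bk_def)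
  next
    case 2 then show ?thesis using Dinv_diag[OF r] Dinv_zero[OF r, of k "Suc k"] by (simp add: bk_def)
  next
    case 3 then show ?thesis using Dinv_zero[OF r, of n k] Dinv_zero[OF r, of n "Suc k"] by (simp add: bk_def)
  qed
qed

lemma What_bk:
  assumes r: "r \<noteq> 0" and lam: "strict_mono lam" "\<And>k. lam k > 0"
  shows "What lam r s t (bk lam r s t k) n = (if n = k then 1 else 0)"
proof -
  define a where "a = lam k / (lam k - lprev lam k)"
  define b where "b = lam k / (lam (Suc k) - lam k)"
  have ga: "(lam k - lprev lam k) * a = lam k" "(lam (Suc k) - lam k) * b = lam k"
    using lam_gaps[OF lam, of k] by (auto simp: a_def b_def)
  have inner: "(\<Sum>i\<le>j. Bmat r s t j i * (Dinv r s t i k * a - Dinv r s t i (Suc k) * b))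
      = (if j = k then a else 0) - (if j = Suc k then b else 0)" for j
  proof -
    have "(\<Sum>i\<le>j. Bmat r s t j i * (Dinv r s t i k * a - Dinv r s t i (Suc k) * b))
      = (\<Sum>i\<le>j. (Bmat r s t j i * Dinv r s t i k) * a - (Bmat r s t j i * Dinv r s t i (Suc k)) * b)"
      by (rule sum.cong) (simp_all add: algebra_simps)
    also have "\<dots> = (\<Sum>i\<le>j. Bmat r s t j i * Dinv r s t i k) * a - (\<Sum>i\<le>j. Bmat r s t j i * Dinv r s t i (Suc k)) * b"
      by (simp add: sum_subtractf sum_distrib_right)
    finally
    show ?thesis using Dinv_prop(2)[OF r] by simp
  qed
  have "bk lam r s t k = (\<lambda>n. complex_of_real (Dinv r s t n k * a - Dinv r s t n (Suc k) * b))"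
    using bk_real[OF r] by (simp add: a_def b_def fun_eq_iff)
  then have "What lam r s t (bk lam r s t k) n = complex_of_real ((1 / lam n) *
     (\<Sum>j\<le>n. (lam j - lprev lam j) * ((if j = k then a else 0) - (if j = Suc k then b else 0))))"
    by (simp only: What_real inner)
  also have "(\<Sum>j\<le>n. (lam j - lprev lam j) * ((if j = k then a else 0) - (if j = Suc k then b else 0)))
     = (\<Sum>j\<le>n. (if j = k then (lam j - lprev lam j) * a else 0)) - (\<Sum>j\<le>n. (if j = Suc k then (lam j - lprev lam j) * b else 0))"
    unfolding sum_subtractf[symmetric] by (rule sum.cong) auto
  also have "\<dots> = (if k \<le> n then lam k else 0) - (if Suc k \<le> n then lam k else 0)"
    using ga by (simp add: sum.delta lprev_def)
  also have "\<dots> = (if n = k then lam k else 0)" by auto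
  finally show ?thesis using lam(2)[of n] by (auto simp: field_simps)
qed

lemma What_bseq:
  assumes r: "r \<noteq> 0"
  shows "What lam r s t (bseq r s t) n = (if lam n = 0 then 0 else 1)"
proof -
  have inner: "(\<Sum>j\<le>m. Bmat r s t m j * (\<Sum>i\<le>j. Dinv r s t j i)) = 1" for m
  proof -
    have "(\<Sum>j\<le>m. Bmat r s t m j * (\<Sum>i\<le>j. Dinv r s t j i))
        = (\<Sum>j\<le>m. Bmat r s t m j * (\<Sum>i\<le>m. Dinv r s t j i))"
    proof (rule sum.cong[OF refl])
      fix j assume "j \<in> {..m}"
      then have "(\<Sum>i\<le>m. Dinv r s t j i) = (\<Sum>i\<le>j. Dinv r s t j i)"
        by (intro sum.mono_neutral_right) (auto simp: Dinv_zero[OF r])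
      then show "Bmat r s t m j * (\<Sum>i\<le>j. Dinv r s t j i) = Bmat r s t m j * (\<Sum>i\<le>m. Dinv r s t j i)"
        by simp
    qed
    also have "\<dots> = (\<Sum>j\<le>m. \<Sum>i\<le>m. Bmat r s t m j * Dinv r s t j i)"
      by (simp add: sum_distrib_left)
    also have "\<dots> = (\<Sum>i\<le>m. \<Sum>j\<le>m. Bmat r s t m j * Dinv r s t j i)"
      by (rule sum.swap)
    also have "\<dots> = (\<Sum>i\<le>m. if m = i then 1 else 0)" using Dinv_prop(2)[OF r] by simp
    also have "\<dots> = 1" by simp
    finally show ?thesis .
  qed
  have "bseq r s t = (\<lambda>n. complex_of_real (\<Sum>i\<le>n. Dinv r s t n i))"
    by (simp add: bseq_def fun_eq_iff)
  then have "What lam r s t (bseq r s t) n = complex_of_real ((1 / lam n) * (\<Sum>j\<le>n. (lam j - lprev lam j) * 1))"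
    by (simp only: What_real inner)
  then show ?thesis by (simp add: telescope)
qed



lemma sup_tail:
  fixes y :: "nat \<Rightarrow> complex"
  assumes "y \<longlonglongrightarrow> 0"
  shows "(\<lambda>m. SUP n. norm (if n < m then 0 else y n)) \<longlonglongrightarrow> 0"
proof (rule LIMSEQ_I)
  fix e :: real assume e: "0 < e"
  from LIMSEQ_D[OF assms, of "e/2"] e obtain M where M: "\<And>n. n \<ge> M \<Longrightarrow> norm (y n) < e/2" by auto
  have "norm ((SUP n. norm (if n < m then 0 else y n)) - 0) < e" if m: "m \<ge> M" for m
  proof -
    have b: "norm (if n < m then 0 else y n) \<le> e/2" for n
      using M[of n] m e by auto
    have le: "(SUP n. norm (if n < m then 0 else y n)) \<le> e/2"
      by (rule cSUP_least) (use b in auto)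
    have bd: "bdd_above (range (\<lambda>n. norm (if n < m then 0 else y n)))"
      by (rule bdd_aboveI2[where M="e/2"]) (rule b)
    have "norm (if 0 < m then 0 else y 0) \<le> (SUP n. norm (if n < m then 0 else y n))"
      by (rule cSUP_upper[OF _ bd]) simp
    then have "0 \<le> (SUP n. norm (if n < m then 0 else y n))"
      by (meson norm_ge_zero order_trans)
    then show ?thesis using le e by auto
  qed
  then show "\<exists>no. \<forall>n\<ge>no. norm ((SUP n'. norm (if n' < n then 0 else y n')) - 0) < e" by blast
qed

lemma bdd_mod:
  fixes y :: "nat \<Rightarrow> complex"
  assumes "\<And>n. norm (y n) \<le> B"
  shows "bdd_above (range (\<lambda>n. norm (y n - (if n < m then \<beta> n else 0))))"
proof (rule bdd_aboveI2)
  fix n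
  have "norm (if n < m then \<beta> n else 0) \<le> (\<Sum>i<m. norm (\<beta> i))"
    by (auto intro: member_le_sum[of n "{..<m}" "\<lambda>i. norm (\<beta> i)", simplified] sum_nonneg)
  then show "norm (y n - (if n < m then \<beta> n else 0)) \<le> B + (\<Sum>i<m. norm (\<beta> i))"
    using norm_triangle_ineq4[of "y n" "if n < m then \<beta> n else 0"] assms[of n] by linarith
qed

lemma sup_uniq:
  fixes y :: "nat \<Rightarrow> complex"
  assumes B: "\<And>n. norm (y n) \<le> B"
    and lim: "(\<lambda>m. SUP n. norm (y n - (if n < m then \<beta> n else 0))) \<longlonglongrightarrow> 0"
  shows "\<beta> = y"
proof
  fix n
  have "norm (y n - \<beta> n) \<le> 0"
  proof (rule LIMSEQ_le_const[OF lim], intro exI allI impI)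
    fix m assume "Suc n \<le> m"
    then have "norm (y n - \<beta> n) = norm (y n - (if n < m then \<beta> n else 0))" by simp
    also have "\<dots> \<le> (SUP n. norm (y n - (if n < m then \<beta> n else 0)))"
      by (rule cSUP_upper) (use bdd_mod[OF B] in auto)
    finally show "norm (y n - \<beta> n) \<le> (SUP n. norm (y n - (if n < m then \<beta> n else 0)))" .
  qed
  then show "\<beta> n = y n" by simp
qed

lemma lp_tail:
  fixes y :: "nat \<Rightarrow> complex"
  assumes p: "1 \<le> p" and S: "summable (\<lambda>n. norm (y n) powr p)"
  shows "(\<lambda>m. (\<Sum>n. norm (if n < m then 0 else y n) powr p) powr (1 / p)) \<longlonglongrightarrow> 0"
proof -
  define f where "f n = norm (y n) powr p" for n
  have g: "(\<lambda>n. norm (if n < m then 0 else y n) powr p) = (\<lambda>n. if n < m then 0 else f n)" for m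
    by (auto simp: f_def fun_eq_iff)
  have sg: "summable (\<lambda>n. if n < m then 0 else f n)" for m
    using S unfolding f_def[symmetric]
    by (subst summable_cong[where g = f]) (auto simp: eventually_at_top_linorder intro!: exI[of _ m])
  have eq: "(\<Sum>n. if n < m then 0 else f n) = suminf f - (\<Sum>i<m. f i)" for m
  proof -
    have "(\<Sum>n. if n < m then 0 else f n) = (\<Sum>n. (if n + m < m then 0 else f (n + m))) + (\<Sum>i<m. if i < m then 0 else f i)"
      by (rule suminf_split_initial_segment[OF sg])
    also have "\<dots> = (\<Sum>n. f (n + m))" by simp
    also have "\<dots> = suminf f - (\<Sum>i<m. f i)"
      by (rule suminf_minus_initial_segment) (use S in \<open>simp add: f_def\<close>)
    finally show ?thesis .
  qed
  have "(\<lambda>m. suminf f - (\<Sum>i<m. f i)) \<longlonglongrightarrow> suminf f - suminf f"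
    by (intro tendsto_diff tendsto_const summable_LIMSEQ) (use S in \<open>simp add: f_def\<close>)
  then have t: "(\<lambda>m. (\<Sum>n. if n < m then 0 else f n)) \<longlonglongrightarrow> 0" unfolding eq by simp
  have nn: "0 \<le> (\<Sum>n. if n < m then 0 else f n)" for m
    by (rule suminf_nonneg[OF sg]) (auto simp: f_def)
  show ?thesis unfolding g
    by (rule tendsto_zero_powrI[OF t tendsto_const]) (use nn p in auto)
qed

lemma lp_uniq:
  fixes y :: "nat \<Rightarrow> complex"
  assumes p: "1 \<le> p" and S: "summable (\<lambda>n. norm (y n) powr p)"
    and lim: "(\<lambda>m. (\<Sum>n. norm (y n - (if n < m then \<beta> n else 0)) powr p) powr (1 / p)) \<longlonglongrightarrow> 0"
  shows "\<beta> = y"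
proof
  fix n
  have "norm (y n - \<beta> n) \<le> 0"
  proof (rule LIMSEQ_le_const[OF lim], intro exI allI impI)
    fix m assume "Suc n \<le> m"
    define g where "g = (\<lambda>i. norm (y i - (if i < m then \<beta> i else 0)) powr p)"
    have sg: "summable g"
      using S unfolding g_def
      by (subst summable_cong[where g = "\<lambda>n. norm (y n) powr p"]) (auto simp: eventually_at_top_linorder intro!: exI[of _ m])
    have "g n \<le> suminf g"
      using sum_le_suminf[OF sg, of "{n}"] by (auto simp: g_def)
    moreover have "g n = norm (y n - \<beta> n) powr p" using \<open>Suc n \<le> m\<close> by (simp add: g_def)
    ultimately have "(norm (y n - \<beta> n) powr p) powr (1/p) \<le> suminf g powr (1/p)"
      using p by (intro powr_mono2) auto
    moreover have "(norm (y n - \<beta> n) powr p) powr (1/p) = norm (y n - \<beta> n)"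
      using p by (simp add: powr_powr powr_one)
    ultimately show "norm (y n - \<beta> n) \<le> (\<Sum>i. norm (y i - (if i < m then \<beta> i else 0)) powr p) powr (1 / p)"
      by (simp add: g_def)
  qed
  then show "\<beta> n = y n" by simp
qed

lemma c_uniq:
  fixes y :: "nat \<Rightarrow> complex"
  assumes conv: "y \<longlonglongrightarrow> l"
    and lim: "(\<lambda>m. SUP n. norm (y n - (if 0 < m then \<beta> 0 else 0) - (if n + 1 < m then \<beta> (Suc n) else 0))) \<longlonglongrightarrow> 0"
  shows "\<beta> 0 = l" "\<beta> (Suc n) = y n - l"
proof -
  define S where "S m = (SUP n. norm (y n - (if 0 < m then \<beta> 0 else 0) - (if n + 1 < m then \<beta> (Suc n) else 0)))" for m
  obtain B where B: "\<And>n. norm (y n) \<le> B"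
    using convergent_imp_Bseq[of y] conv by (auto simp: convergent_def elim!: BseqE)
  have bd: "bdd_above (range (\<lambda>n. norm (y n - (if 0 < m then \<beta> 0 else 0) - (if n + 1 < m then \<beta> (Suc n) else 0))))" for m
  proof -
    have B': "norm (y n - (if 0 < m then \<beta> 0 else 0)) \<le> B + norm (\<beta> 0)" for n
    proof (cases "0 < m")
      case True
      then show ?thesis using B[of n] norm_triangle_ineq4[of "y n" "\<beta> 0"] by simp
    next
      case False
      have "norm (y n) \<le> B + norm (\<beta> 0)" using B[of n] norm_ge_zero[of "\<beta> 0"] by linarith
      then show ?thesis using False by simp
    qed
    have eq: "(if n + 1 < m then \<beta> (Suc n) else 0) = (if n < m - 1 then (\<beta> \<circ> Suc) n else 0)" for n
      by auto
    show ?thesis unfolding eq using bdd_mod[OF B', where m="m - 1" and \<beta>="\<beta> \<circ> Suc"] by simp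
  qed
  have le: "norm (y n - (if 0 < m then \<beta> 0 else 0) - (if n + 1 < m then \<beta> (Suc n) else 0)) \<le> S m" for n m
    unfolding S_def by (rule cSUP_upper[OF _ bd]) simp
  have lim': "S \<longlonglongrightarrow> 0" using lim unfolding S_def .
  have "(\<lambda>m. norm (y m - \<beta> 0)) \<longlonglongrightarrow> 0"
  proof (rule tendsto_sandwich[OF _ _ tendsto_const lim'])
    show "\<forall>\<^sub>F m in sequentially. 0 \<le> norm (y m - \<beta> 0)" by simp
    show "\<forall>\<^sub>F m in sequentially. norm (y m - \<beta> 0) \<le> S m"
      unfolding eventually_at_top_linorder
    proof (intro exI allI impI)
      fix m :: nat assume "1 \<le> m"
      then show "norm (y m - \<beta> 0) \<le> S m" using le[of m m] by simp
    qed
  qed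
  then have "(\<lambda>m. y m - \<beta> 0) \<longlonglongrightarrow> 0" by (simp add: tendsto_norm_zero_iff)
  then have "(\<lambda>m. (y m - \<beta> 0) + \<beta> 0) \<longlonglongrightarrow> 0 + \<beta> 0" by (intro tendsto_add tendsto_const)
  then have "y \<longlonglongrightarrow> \<beta> 0" by simp
  then show b0: "\<beta> 0 = l" using conv LIMSEQ_unique by blast
  have "norm (y n - \<beta> 0 - \<beta> (Suc n)) \<le> 0"
  proof (rule LIMSEQ_le_const[OF lim'], intro exI allI impI)
    fix m assume "Suc (Suc n) \<le> m"
    then show "norm (y n - \<beta> 0 - \<beta> (Suc n)) \<le> S m" using le[of n m] by simp
  qed
  then show "\<beta> (Suc n) = y n - l" using b0 by (simp add: algebra_simps)
qed



context
  fixes r s t :: real and lam :: "nat \<Rightarrow> real"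
  assumes r: "r \<noteq> 0" and lmono: "strict_mono lam" and lpos: "\<And>k. lam k > 0"
begin

lemma WB: "What lam r s t (bk lam r s t k) n = (if n = k then 1 else 0)"
  using What_bk[OF r lmono lpos] .

lemma WBS: "What lam r s t (bseq r s t) n = 1"
  using What_bseq[OF r, of lam s t n] lpos[of n] by simp

lemma W_comb: "What lam r s t (\<lambda>n. x n - (\<Sum>k<m. \<beta> k * bk lam r s t k n)) n
    = What lam r s t x n - (if n < m then \<beta> n else 0)"
  unfolding What_sum WB by (simp add: if_distrib[of "\<lambda>z. _ * z"] cong: if_cong)

lemma W_combc_sum: "(\<Sum>i<m. \<beta> i * What lam r s t (if i = 0 then bseq r s t else bk lam r s t (i - 1)) n)
    = (if 0 < m then \<beta> 0 else 0) + (if n + 1 < m then \<beta> (Suc n) else 0)"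
proof (induction m)
  case 0 then show ?case by simp
next
  case (Suc m)
  show ?case
  proof (cases m)
    case 0 then show ?thesis using Suc by (simp add: WBS)
  next
    case (Suc q)
    then show ?thesis using Suc.IH by (cases "n = q") (auto simp: WB)
  qed
qed

lemma W_combc: "What lam r s t (\<lambda>n. x n - (\<Sum>i<m. \<beta> i * (if i = 0 then bseq r s t else bk lam r s t (i - 1)) n)) n
    = What lam r s t x n - (if 0 < m then \<beta> 0 else 0) - (if n + 1 < m then \<beta> (Suc n) else 0)"
  unfolding What_sum[where e="\<lambda>i. if i = 0 then bseq r s t else bk lam r s t (i - 1)"] W_combc_sum
  by simp

lemma W_final_c: "What lam r s t (\<lambda>n. x n - L * bseq r s t n - (\<Sum>k<m. (y k) * bk lam r s t k n)) n
    = What lam r s t x n - L - (if n < m then y n else 0)"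
proof -
  have e: "(\<lambda>n. x n - L * bseq r s t n - (\<Sum>k<m. (y k) * bk lam r s t k n))
     = (\<lambda>n. (x n + (- L) * bseq r s t n) - (\<Sum>k<m. (y k) * bk lam r s t k n))"
    by simp
  have "What lam r s t (\<lambda>n. x n - L * bseq r s t n - (\<Sum>k<m. (y k) * bk lam r s t k n)) n
      = What lam r s t (\<lambda>n. x n + (- L) * bseq r s t n) n - (if n < m then y n else 0)"
    by (simp only: e W_comb)
  also have "\<dots> = What lam r s t x n - L - (if n < m then y n else 0)"
    by (simp only: What_lin WBS) simp
  finally show ?thesis .
qed

end

theorem theorem3:
  fixes r s t :: real and lam :: "nat \<Rightarrow> real"
  assumes "r \<noteq> 0" and "s \<noteq> 0" and "t \<noteq> 0"
    and "strict_mono lam" and "\<And>k. lam k > 0" and "filterlim lam at_top sequentially"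
  shows
   "(schauder_basis (c0_lam lam r s t) (sup_norm_lam lam r s t) (bk lam r s t) \<and>
     (\<forall>x \<in> c0_lam lam r s t.
        (\<lambda>m. sup_norm_lam lam r s t
               (\<lambda>n. x n - (\<Sum>k<m. What lam r s t x k * bk lam r s t k n))) \<longlonglongrightarrow> 0))
    \<and>
    (\<forall>p::real. 1 \<le> p \<longrightarrow>
      schauder_basis (lp_lam p lam r s t) (p_norm_lam p lam r s t) (bk lam r s t) \<and>
      (\<forall>x \<in> lp_lam p lam r s t.
        (\<lambda>m. p_norm_lam p lam r s t
               (\<lambda>n. x n - (\<Sum>k<m. What lam r s t x k * bk lam r s t k n))) \<longlonglongrightarrow> 0))
    \<and>
    (schauder_basis (c_lam lam r s t) (sup_norm_lam lam r s t)
        (\<lambda>i. if i = 0 then bseq r s t else bk lam r s t (i - 1)) \<and>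
     (\<forall>x \<in> c_lam lam r s t.
        (\<lambda>m. sup_norm_lam lam r s t
               (\<lambda>n. x n - lim (What lam r s t x) * bseq r s t n
                   - (\<Sum>k<m. (What lam r s t x k - lim (What lam r s t x)) * bk lam r s t k n)))
          \<longlonglongrightarrow> 0))"

proof -
  note WB' = WB[OF assms(1) assms(4) assms(5)]
  note WBS' = WBS[OF assms(1) assms(4) assms(5)]
  note W_comb' = W_comb[OF assms(1) assms(4) assms(5)]
  note W_combc' = W_combc[OF assms(1) assms(4) assms(5)]
  note W_final_c' = W_final_c[OF assms(1) assms(4) assms(5)]
  let ?W = "What lam r s t"
  have WBf: "What lam r s t (bk lam r s t k) = (\<lambda>n. if n = k then 1 else 0)" for k
    by (rule ext) (rule WB')
  have WBSf: "What lam r s t (bseq r s t) = (\<lambda>n. 1)"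
    by (rule ext) (rule WBS')
  have SN: "sup_norm_lam lam r s t (\<lambda>n. x n - (\<Sum>k<m. \<beta> k * bk lam r s t k n))
      = (SUP n. norm (?W x n - (if n < m then \<beta> n else 0)))" for x \<beta> m
    unfolding sup_norm_lam_def W_comb' ..
  have PN: "p_norm_lam p lam r s t (\<lambda>n. x n - (\<Sum>k<m. \<beta> k * bk lam r s t k n))
      = (\<Sum>n. norm (?W x n - (if n < m then \<beta> n else 0)) powr p) powr (1 / p)" for p x \<beta> m
    unfolding p_norm_lam_def W_comb' ..
  have sub: "?W x n - (if n < m then ?W x n else 0) = (if n < m then 0 else ?W x n)" for x n m
    by simp
  have bdd: "\<exists>B. \<forall>n. norm (?W x n) \<le> B" if "convergent (?W x)" for x
    using convergent_imp_Bseq[OF that] by (auto elim!: BseqE)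
  have ev0: "(\<lambda>n. if n = k then (1::complex) else 0) \<longlonglongrightarrow> 0" for k
    by (rule tendsto_eventually) (auto simp: eventually_at_top_linorder intro!: exI[of _ "Suc k"])
  have bk_c0: "bk lam r s t k \<in> c0_lam lam r s t" for k
    unfolding c0_lam_def using ev0[of k] by (simp add: WBf)
  have bk_c: "bk lam r s t k \<in> c_lam lam r s t" for k
    unfolding c_lam_def convergent_def using ev0[of k] by (auto simp: WBf)
  have bk_lp: "bk lam r s t k \<in> lp_lam p lam r s t" if "1 \<le> p" for k p
    unfolding lp_lam_def using that by (auto simp: WBf split: if_split_asm intro!: summable_finite[of "{k}"])

  have tail0: "(\<lambda>m. sup_norm_lam lam r s t (\<lambda>n. x n - (\<Sum>k<m. ?W x k * bk lam r s t k n))) \<longlonglongrightarrow> 0"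
    if "x \<in> c0_lam lam r s t" for x
    unfolding SN sub using sup_tail[of "?W x"] that by (simp add: c0_lam_def)
  have P1: "schauder_basis (c0_lam lam r s t) (sup_norm_lam lam r s t) (bk lam r s t)"
    unfolding schauder_basis_def
  proof (intro conjI allI ballI)
    show "bk lam r s t k \<in> c0_lam lam r s t" for k by (rule bk_c0)
    fix x assume x: "x \<in> c0_lam lam r s t"
    show "\<exists>!\<beta>. (\<lambda>m. sup_norm_lam lam r s t (\<lambda>n. x n - (\<Sum>k<m. \<beta> k * bk lam r s t k n))) \<longlonglongrightarrow> 0"
    proof (rule ex1I[of _ "?W x"])
      show "(\<lambda>m. sup_norm_lam lam r s t (\<lambda>n. x n - (\<Sum>k<m. ?W x k * bk lam r s t k n))) \<longlonglongrightarrow> 0"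
        using tail0[OF x] .
      fix \<beta> assume "(\<lambda>m. sup_norm_lam lam r s t (\<lambda>n. x n - (\<Sum>k<m. \<beta> k * bk lam r s t k n))) \<longlonglongrightarrow> 0"
      then have lim: "(\<lambda>m. SUP n. norm (?W x n - (if n < m then \<beta> n else 0))) \<longlonglongrightarrow> 0" unfolding SN .
      from x have "convergent (?W x)" by (auto simp: c0_lam_def convergent_def)
      then obtain B where "\<And>n. norm (?W x n) \<le> B" using bdd by blast
      then show "\<beta> = ?W x" using sup_uniq lim by blast
    qed
  qed

  have tailp: "(\<lambda>m. p_norm_lam p lam r s t (\<lambda>n. x n - (\<Sum>k<m. ?W x k * bk lam r s t k n))) \<longlonglongrightarrow> 0"
    if "x \<in> lp_lam p lam r s t" "1 \<le> p" for x p
    unfolding PN sub using lp_tail[of p "?W x"] that by (simp add: lp_lam_def)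
  have P2: "schauder_basis (lp_lam p lam r s t) (p_norm_lam p lam r s t) (bk lam r s t)" if p: "1 \<le> p" for p
    unfolding schauder_basis_def
  proof (intro conjI allI ballI)
    show "bk lam r s t k \<in> lp_lam p lam r s t" for k by (rule bk_lp[OF p])
    fix x assume x: "x \<in> lp_lam p lam r s t"
    show "\<exists>!\<beta>. (\<lambda>m. p_norm_lam p lam r s t (\<lambda>n. x n - (\<Sum>k<m. \<beta> k * bk lam r s t k n))) \<longlonglongrightarrow> 0"
    proof (rule ex1I[of _ "?W x"])
      show "(\<lambda>m. p_norm_lam p lam r s t (\<lambda>n. x n - (\<Sum>k<m. ?W x k * bk lam r s t k n))) \<longlonglongrightarrow> 0"
        using tailp[OF x p] .
      fix \<beta> assume "(\<lambda>m. p_norm_lam p lam r s t (\<lambda>n. x n - (\<Sum>k<m. \<beta> k * bk lam r s t k n))) \<longlonglongrightarrow> 0"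
      then have lim: "(\<lambda>m. (\<Sum>n. norm (?W x n - (if n < m then \<beta> n else 0)) powr p) powr (1 / p)) \<longlonglongrightarrow> 0"
        unfolding PN .
      show "\<beta> = ?W x" using lp_uniq[OF p _ lim] x by (simp add: lp_lam_def)
    qed
  qed

  let ?e = "\<lambda>i. if i = 0 then bseq r s t else bk lam r s t (i - 1)"
  have SNc: "sup_norm_lam lam r s t (\<lambda>n. x n - (\<Sum>i<m. \<beta> i * ?e i n))
      = (SUP n. norm (?W x n - (if 0 < m then \<beta> 0 else 0) - (if n + 1 < m then \<beta> (Suc n) else 0)))" for x \<beta> m
    unfolding sup_norm_lam_def W_combc' ..
  have P3: "schauder_basis (c_lam lam r s t) (sup_norm_lam lam r s t) ?e"
    unfolding schauder_basis_def
  proof (intro conjI allI ballI)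
    show "?e k \<in> c_lam lam r s t" for k
      using bk_c[of "k - 1"] by (auto simp: c_lam_def WBSf convergent_const)
    fix x assume x: "x \<in> c_lam lam r s t"
    define l where "l = lim (?W x)"
    have yl: "?W x \<longlonglongrightarrow> l" using x by (simp add: c_lam_def l_def convergent_LIMSEQ_iff)
    have yl0: "(\<lambda>n. ?W x n - l) \<longlonglongrightarrow> 0" using tendsto_diff[OF yl tendsto_const[of l]] by simp
    show "\<exists>!\<beta>. (\<lambda>m. sup_norm_lam lam r s t (\<lambda>n. x n - (\<Sum>i<m. \<beta> i * ?e i n))) \<longlonglongrightarrow> 0"
    proof (rule ex1I[of _ "\<lambda>i. if i = 0 then l else ?W x (i - 1) - l"])
      have eq: "(\<lambda>m. sup_norm_lam lam r s t (\<lambda>n. x n - (\<Sum>i<Suc m. (if i = 0 then l else ?W x (i - 1) - l) * ?e i n)))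
          = (\<lambda>m. SUP n. norm (if n < m then 0 else ?W x n - l))"
        unfolding SNc by (intro ext SUP_cong) auto
      show "(\<lambda>m. sup_norm_lam lam r s t (\<lambda>n. x n - (\<Sum>i<m. (if i = 0 then l else ?W x (i - 1) - l) * ?e i n))) \<longlonglongrightarrow> 0"
        by (rule LIMSEQ_imp_Suc) (unfold eq, rule sup_tail[OF yl0])
      fix \<beta> assume "(\<lambda>m. sup_norm_lam lam r s t (\<lambda>n. x n - (\<Sum>i<m. \<beta> i * ?e i n))) \<longlonglongrightarrow> 0"
      then have lim: "(\<lambda>m. SUP n. norm (?W x n - (if 0 < m then \<beta> 0 else 0) - (if n + 1 < m then \<beta> (Suc n) else 0))) \<longlonglongrightarrow> 0"
        unfolding SNc .
      show "\<beta> = (\<lambda>i. if i = 0 then l else ?W x (i - 1) - l)"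
      proof
        fix i show "\<beta> i = (if i = 0 then l else ?W x (i - 1) - l)"
          using c_uniq(1)[OF yl lim] c_uniq(2)[OF yl lim, of "i - 1"] by (cases i) auto
      qed
    qed
  qed
  have tailc: "(\<lambda>m. sup_norm_lam lam r s t
               (\<lambda>n. x n - lim (?W x) * bseq r s t n
                   - (\<Sum>k<m. (?W x k - lim (?W x)) * bk lam r s t k n))) \<longlonglongrightarrow> 0"
    if x: "x \<in> c_lam lam r s t" for x
  proof -
    define l where "l = lim (?W x)"
    have yl: "?W x \<longlonglongrightarrow> l" using x by (simp add: c_lam_def l_def convergent_LIMSEQ_iff)
    have yl0: "(\<lambda>n. ?W x n - l) \<longlonglongrightarrow> 0" using tendsto_diff[OF yl tendsto_const[of l]] by simp
    have "(\<lambda>m. sup_norm_lam lam r s t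
               (\<lambda>n. x n - l * bseq r s t n - (\<Sum>k<m. (?W x k - l) * bk lam r s t k n)))
        = (\<lambda>m. SUP n. norm (if n < m then 0 else ?W x n - l))"
      unfolding sup_norm_lam_def W_final_c' by (intro ext SUP_cong) auto
    then show ?thesis using sup_tail[OF yl0] by (simp add: l_def)
  qed
  show ?thesis using P1 tail0 P2 tailp P3 tailc by blast
qed


end
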